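(* Let $\theta\in M_{k,d}([0,\infty))$, $r\in(0,\infty)^k$, $\beta>0$, and let $\phi$ be a KMS$_\beta$ state of $(B_\theta,\alpha^r)$. Suppose $p,q\in\mathbb{N}^k$ satisfy $p^Tr=q^Tr$, let $f\in C(\mathbb{S}^d)$, and put $P:=(p\vee q)-p$. Then \[ \phi\big(V_p\,\iota(f)V_q^*\big)=\phi\big(V_{p+lP}\,\iota(f\circ R_{l\theta^TP})\,V_{q+lP}^*\big)\quad\text{for all }l\in\mathbb{N}. \] Moreover, if $p\neq q$ then $\phi(V_p\,\iota(f)V_q^* )=0$.
   Context: Vectors are columns; $A^T$ transpose; $p\vee q$ coordinatewise maximum. $B_\theta$ is the universal $C^*$-algebra generated by a unitary representation $U$ of $\mathbb{Z}^d$ and a Nica-covariant isometric representation $V$ of $\mathbb{N}^k$ ($V_pV_p^*V_qV_q^*=V_{p\vee q}V_{p\vee q}^*$) with $U_nV_p=e^{2\pi ip^T\theta n}V_pU_n$. $\alpha^r$ is the dynamics with $\alpha^r_t(U_n)=U_n$, $\alpha^r_t(V_p)=e^{itp^Tr}V_p$. $\mathbb{S}^d=\mathbb{R}^d/\mathbb{Z}^d$ (functions on it are $\mathbb{Z}^d$-periodic functions on $\mathbb{R}^d$), $g_n(x)=e^{2\pi ix^Tn}$, $\iota:C(\mathbb{S}^d)\to B_\theta$ the homomorphism with $\iota(g_n)=U_n$, and $R_y(x)=x+y$ for $y\in\mathbb{R}^d$. *)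

theory Defs
  imports "HOL-Analysis.Analysis"
begin

text \<open>A unital C*-algebra: a unital real Banach algebra together with a complex scalar
  multiplication sm (extending the real one) and an involution st satisfying the C*-identity.\<close>

definition cstar_algebra :: "(complex \<Rightarrow> 'a::{real_normed_algebra_1,banach} \<Rightarrow> 'a) \<Rightarrow> ('a \<Rightarrow> 'a) \<Rightarrow> bool"
  where "cstar_algebra sm st \<longleftrightarrow>
    (\<forall>r x. sm (complex_of_real r) x = scaleR r x) \<and>
    (\<forall>c x y. sm c (x + y) = sm c x + sm c y) \<and>
    (\<forall>c d x. sm (c + d) x = sm c x + sm d x) \<and>
    (\<forall>c d x. sm (c * d) x = sm c (sm d x)) \<and>
    (\<forall>c x y. sm c (x * y) = sm c x * y \<and> sm c (x * y) = x * sm c y) \<and>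
    (\<forall>c x. norm (sm c x) = cmod c * norm x) \<and>
    (\<forall>x. st (st x) = x) \<and>
    (\<forall>x y. st (x + y) = st x + st y) \<and>
    (\<forall>x y. st (x * y) = st y * st x) \<and>
    (\<forall>c x. st (sm c x) = sm (cnj c) (st x)) \<and>
    (\<forall>x. norm (st x * x) = norm x ^ 2)"

definition is_state :: "(complex \<Rightarrow> 'a \<Rightarrow> 'a) \<Rightarrow> ('a \<Rightarrow> 'a) \<Rightarrow> ('a::ring_1 \<Rightarrow> complex) \<Rightarrow> bool"
  where "is_state sm st \<phi> \<longleftrightarrow>
    (\<forall>x y. \<phi> (x + y) = \<phi> x + \<phi> y) \<and>
    (\<forall>c x. \<phi> (sm c x) = c * \<phi> x) \<and>
    (\<forall>x. Im (\<phi> (st x * x)) = 0 \<and> Re (\<phi> (st x * x)) \<ge> 0) \<and>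
    \<phi> 1 = 1"

definition star_automorphism :: "(complex \<Rightarrow> 'a \<Rightarrow> 'a) \<Rightarrow> ('a \<Rightarrow> 'a) \<Rightarrow> ('a::ring_1 \<Rightarrow> 'a) \<Rightarrow> bool"
  where "star_automorphism sm st h \<longleftrightarrow> bij h \<and>
    (\<forall>x y. h (x + y) = h x + h y) \<and> (\<forall>x y. h (x * y) = h x * h y) \<and>
    (\<forall>c x. h (sm c x) = sm c (h x)) \<and> (\<forall>x. h (st x) = st (h x)) \<and> h 1 = 1"

definition is_dynamics :: "(complex \<Rightarrow> 'a \<Rightarrow> 'a) \<Rightarrow> ('a \<Rightarrow> 'a) \<Rightarrow> (real \<Rightarrow> 'a::real_normed_algebra_1 \<Rightarrow> 'a) \<Rightarrow> bool"
  where "is_dynamics sm st \<alpha> \<longleftrightarrow>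
    (\<forall>t. star_automorphism sm st (\<alpha> t)) \<and>
    \<alpha> 0 = id \<and> (\<forall>s t. \<alpha> (s + t) = \<alpha> s \<circ> \<alpha> t) \<and>
    (\<forall>a. continuous_on UNIV (\<lambda>t. \<alpha> t a))"

definition is_KMS :: "real \<Rightarrow> (real \<Rightarrow> 'a \<Rightarrow> 'a) \<Rightarrow> ('a::times \<Rightarrow> complex) \<Rightarrow> bool"
  where "is_KMS \<beta> \<alpha> \<phi> \<longleftrightarrow>
    (\<forall>a b. \<exists>F :: complex \<Rightarrow> complex.
       continuous_on {z. 0 \<le> Im z \<and> Im z \<le> \<beta>} F \<and>
       F holomorphic_on {z. 0 < Im z \<and> Im z < \<beta>} \<and>
       bounded (F ` {z. 0 \<le> Im z \<and> Im z \<le> \<beta>}) \<and>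
       (\<forall>t. F (complex_of_real t) = \<phi> (a * \<alpha> t b)) \<and>
       (\<forall>t. F (complex_of_real t + \<i> * complex_of_real \<beta>) = \<phi> (\<alpha> t b * a)))"

definition bil :: "nat^'k \<Rightarrow> real^'d^'k \<Rightarrow> int^'d \<Rightarrow> real"
  where "bil p \<theta> n = (\<Sum>i\<in>UNIV. \<Sum>j\<in>UNIV. real (p$i) * (\<theta>$i$j) * real_of_int (n$j))"

definition thetaT :: "real^'d^'k \<Rightarrow> nat^'k \<Rightarrow> real^'d"
  where "thetaT \<theta> P = (\<chi> j. \<Sum>i\<in>UNIV. (\<theta>$i$j) * real (P$i))"

definition dotr :: "nat^'k \<Rightarrow> real^'k \<Rightarrow> real"
  where "dotr p r = (\<Sum>i\<in>UNIV. real (p$i) * r$i)"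

definition vmax :: "nat^'k \<Rightarrow> nat^'k \<Rightarrow> nat^'k"
  where "vmax p q = (\<chi> i. max (p$i) (q$i))"

definition Btheta_relations ::
  "(complex \<Rightarrow> 'a \<Rightarrow> 'a) \<Rightarrow> ('a \<Rightarrow> 'a) \<Rightarrow> real^'d^'k \<Rightarrow> (int^'d \<Rightarrow> 'a::ring_1) \<Rightarrow> (nat^'k \<Rightarrow> 'a) \<Rightarrow> bool"
  where "Btheta_relations sm st \<theta> U V \<longleftrightarrow>
    U 0 = 1 \<and> (\<forall>n m. U (n + m) = U n * U m) \<and>
    (\<forall>n. st (U n) * U n = 1 \<and> U n * st (U n) = 1) \<and>
    V 0 = 1 \<and> (\<forall>p q. V (p + q) = V p * V q) \<and>
    (\<forall>p. st (V p) * V p = 1) \<and>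
    (\<forall>p q. V p * st (V p) * (V q * st (V q)) = V (vmax p q) * st (V (vmax p q))) \<and>
    (\<forall>n p. U n * V p = sm (exp (2 * pi * \<i> * complex_of_real (bil p \<theta> n))) (V p * U n))"

text \<open>C(S^d): continuous Z^d-periodic functions R^d -> C.\<close>
definition Csd :: "(real^'d \<Rightarrow> complex) set"
  where "Csd = {f. continuous_on UNIV f \<and>
     (\<forall>x n. f (x + (\<chi> j. real_of_int (n$j))) = f x)}"

definition gchar :: "int^'d \<Rightarrow> real^'d \<Rightarrow> complex"
  where "gchar n x = exp (2 * pi * \<i> * complex_of_real (\<Sum>j\<in>UNIV. x$j * real_of_int (n$j)))"

definition is_iota ::
  "(complex \<Rightarrow> 'a \<Rightarrow> 'a) \<Rightarrow> ('a \<Rightarrow> 'a) \<Rightarrow> (int^'d \<Rightarrow> 'a::ring_1) \<Rightarrow> ((real^'d \<Rightarrow> complex) \<Rightarrow> 'a) \<Rightarrow> bool"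
  where "is_iota sm st U \<iota> \<longleftrightarrow>
    (\<forall>f\<in>Csd. \<forall>g\<in>Csd. \<iota> (\<lambda>x. f x + g x) = \<iota> f + \<iota> g \<and> \<iota> (\<lambda>x. f x * g x) = \<iota> f * \<iota> g) \<and>
    (\<forall>f\<in>Csd. \<forall>c. \<iota> (\<lambda>x. c * f x) = sm c (\<iota> f)) \<and>
    (\<forall>f\<in>Csd. \<iota> (\<lambda>x. cnj (f x)) = st (\<iota> f)) \<and>
    \<iota> (\<lambda>x. 1) = 1 \<and>
    (\<forall>n. \<iota> (gchar n) = U n)"

end

theory Submission
  imports Defs "HOL-Complex_Analysis.Complex_Analysis"
begin


lemma zero_limpt_Reals: "(0::complex) islimpt \<real>"
  unfolding islimpt_approachable
proof (intro allI impI)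
  fix e :: real assume e: "0 < e"
  show "\<exists>x'::complex\<in>\<real>. x' \<noteq> 0 \<and> dist x' 0 < e"
    by (rule bexI[where x="complex_of_real (e/2)"]) (use e in \<open>auto simp: dist_norm\<close>)
qed

lemma strip_zero:
  fixes F :: "complex \<Rightarrow> complex" and \<beta> :: real
  assumes b: "\<beta> > 0"
    and contF: "continuous_on {z. 0 \<le> Im z \<and> Im z \<le> \<beta>} F"
    and holF: "F holomorphic_on {z. 0 < Im z \<and> Im z < \<beta>}"
    and zero: "\<And>t. F (complex_of_real t) = 0"
  shows "F (complex_of_real t + \<i> * complex_of_real \<beta>) = 0"
proof -
  define S where "S = {z. - \<beta> < Im z \<and> Im z < \<beta>}"
  have oS: "open S" unfolding S_def
    by (simp add: open_Collect_conj open_halfspace_Im_gt open_halfspace_Im_lt)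
  have cS: "convex S" unfolding S_def
    using convex_Int[OF convex_halfspace_Im_gt[of "-\<beta>"] convex_halfspace_Im_lt[of \<beta>]]
    by (simp add: Collect_conj_eq)
  define G where "G = (\<lambda>z. if 0 \<le> Im z then F z else cnj(F(cnj z)))"
  have holG: "G holomorphic_on S" unfolding G_def
  proof (rule Schwarz_reflection[OF oS])
    show "cnj ` S \<subseteq> S" unfolding S_def by auto
    show "F holomorphic_on S \<inter> {z. 0 < Im z}"
      by (rule holomorphic_on_subset[OF holF]) (auto simp: S_def)
    show "continuous_on (S \<inter> {z. 0 \<le> Im z}) F"
      by (rule continuous_on_subset[OF contF]) (auto simp: S_def)
    show "F z \<in> \<real>" if "z \<in> S" "z \<in> \<real>" for z
      using that zero by (metis Reals_cases Reals_0)
  qed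
  have G0: "G w = 0" if "w \<in> S" for w
  proof (rule analytic_continuation[OF holG oS convex_connected[OF cS], of "\<real>" 0])
    show "(\<real>::complex set) \<subseteq> S" using b by (auto simp: S_def elim!: Reals_cases)
    show "0 \<in> S" using b by (simp add: S_def)
    show "(0::complex) islimpt \<real>" by (rule zero_limpt_Reals)
    show "G z = 0" if "z \<in> (\<real>::complex set)" for z
      using that zero by (auto simp: G_def elim!: Reals_cases)
    show "w \<in> S" by fact
  qed
  define z where "z n = complex_of_real t + \<i> * complex_of_real (\<beta> * real n / real (Suc n))" for n
  have zS: "z n \<in> {z. 0 \<le> Im z \<and> Im z \<le> \<beta>}" for n
    using b by (auto simp: z_def field_simps)
  have Fz: "F (z n) = 0" for n
  proof -
    have h1: "\<beta> * real n / real (Suc n) < \<beta>" using b by (simp add: field_simps)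
    have h2: "0 \<le> \<beta> * real n / real (Suc n)" using b by simp
    have "z n \<in> S" using b h1 h2 unfolding z_def S_def by simp
    moreover have "0 \<le> Im (z n)" using zS[of n] by simp
    ultimately show ?thesis using G0[of "z n"] by (simp add: G_def)
  qed
  have lim: "z \<longlonglongrightarrow> complex_of_real t + \<i> * complex_of_real \<beta>"
  proof -
    have "(\<lambda>n. \<beta> * (real n / real (Suc n))) \<longlonglongrightarrow> \<beta> * 1"
      by (intro tendsto_intros LIMSEQ_n_over_Suc_n)
    then have "(\<lambda>n. complex_of_real (\<beta> * real n / real (Suc n))) \<longlonglongrightarrow> complex_of_real \<beta>"
      by (intro tendsto_of_real) simp
    from tendsto_add[OF tendsto_const tendsto_mult[OF tendsto_const this]]
    have "(\<lambda>n. complex_of_real t + \<i> * complex_of_real (\<beta> * real n / real (Suc n))) \<longlonglongrightarrow> complex_of_real t + \<i> * complex_of_real (\<beta>)" .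
    then show ?thesis unfolding z_def .
  qed
  have "(\<lambda>n. F (z n)) \<longlonglongrightarrow> F (complex_of_real t + \<i> * complex_of_real \<beta>)"
    using continuous_on_tendsto_compose[OF contF lim] zS b by auto
  then show ?thesis using Fz LIMSEQ_unique by (simp add: LIMSEQ_const_iff)
qed


locale cstar =
  fixes sm :: "complex \<Rightarrow> 'a::{real_normed_algebra_1,banach} \<Rightarrow> 'a" and st :: "'a \<Rightarrow> 'a"
  assumes alg: "cstar_algebra sm st"
begin

lemma sm_real: "sm (complex_of_real r) x = scaleR r x" using alg by (simp add: cstar_algebra_def)
lemma sm_add: "sm c (x + y) = sm c x + sm c y" using alg by (simp add: cstar_algebra_def)
lemma sm_add2: "sm (c + d) x = sm c x + sm d x" using alg by (simp add: cstar_algebra_def)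
lemma sm_mult: "sm (c * d) x = sm c (sm d x)" using alg by (simp add: cstar_algebra_def)
lemma sm_times1: "sm c (x * y) = sm c x * y" using alg unfolding cstar_algebra_def by blast
lemma sm_times2: "sm c (x * y) = x * sm c y" using alg unfolding cstar_algebra_def by blast
lemma st_st[simp]: "st (st x) = x" using alg by (simp add: cstar_algebra_def)
lemma st_add: "st (x + y) = st x + st y" using alg by (simp add: cstar_algebra_def)
lemma st_mult: "st (x * y) = st y * st x" using alg by (simp add: cstar_algebra_def)
lemma st_sm: "st (sm c x) = sm (cnj c) (st x)" using alg by (simp add: cstar_algebra_def)

lemma sm_left: "sm c x = sm c 1 * x" using sm_times1[of c 1 x] by simp
lemma sm_right: "sm c x = x * sm c 1" using sm_times2[of c x 1] by simp
lemma central: "sm c 1 * x = x * sm c 1" using sm_left[of c x] sm_right[of c x] by simp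
lemma s_mult: "sm (c * d) 1 = sm c 1 * sm d 1" using sm_mult[of c d 1] sm_left[of c "sm d 1"] by simp
lemma s_add: "sm (c + d) 1 = sm c 1 + sm d 1" by (rule sm_add2)
lemma s_one[simp]: "sm 1 1 = 1" using sm_real[of 1 1] by simp
lemma s_zero[simp]: "sm 0 x = 0" using sm_real[of 0 x] by simp
lemma st_0[simp]: "st 0 = 0" using st_add[of 0 0] by simp
lemma st_1[simp]: "st 1 = 1"
proof -
  have "st 1 = st 1 * st (st 1)" by simp
  also have "\<dots> = st (st 1 * 1)" by (simp only: st_mult)
  also have "\<dots> = 1" by simp
  finally show ?thesis .
qed
lemma st_minus: "st (- x) = - st x"
proof -
  have "st x + st (- x) = 0" using st_add[of x "- x"] by simp
  then show ?thesis by (simp add: add_eq_0_iff)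
qed
lemma st_diff: "st (x - y) = st x - st y"
proof -
  have "st (x - y) = st (x + - y)" by simp
  also have "\<dots> = st x + st (- y)" by (rule st_add)
  finally show ?thesis by (simp add: st_minus)
qed
lemma st_s: "st (sm c 1) = sm (cnj c) 1" using st_sm[of c 1] by simp
lemma sm_assoc_left: "x * (sm c 1 * y) = sm c 1 * (x * y)"
proof -
  have "x * (sm c 1 * y) = (x * sm c 1) * y" by (simp add: mult.assoc)
  also have "\<dots> = (sm c 1 * x) * y" by (simp only: central)
  finally show ?thesis by (simp add: mult.assoc)
qed
lemma s_commute: "sm c 1 * sm d 1 = sm d 1 * sm c 1" by (rule central)

end

locale cstate = cstar +
  fixes \<phi> :: "'a::{real_normed_algebra_1,banach} \<Rightarrow> complex"
  assumes state: "is_state sm st \<phi>"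
begin

lemma phi_add: "\<phi> (x + y) = \<phi> x + \<phi> y" using state by (simp add: is_state_def)
lemma phi_sm: "\<phi> (sm c x) = c * \<phi> x" using state by (simp add: is_state_def)
lemma phi_pos_Im: "Im (\<phi> (st x * x)) = 0" using state by (simp add: is_state_def)
lemma phi_pos_Re: "Re (\<phi> (st x * x)) \<ge> 0" using state by (simp add: is_state_def)
lemma phi_1: "\<phi> 1 = 1" using state by (simp add: is_state_def)
lemma phi_s: "\<phi> (sm c 1 * x) = c * \<phi> x" using phi_sm[of c x] sm_left[of c x] by simp
lemma phi_0[simp]: "\<phi> 0 = 0" using phi_add[of 0 0] by simp
lemma phi_diff: "\<phi> (x - y) = \<phi> x - \<phi> y" using phi_add[of "x - y" y] by (simp add: eq_diff_eq)

definition A where "A x y = \<phi> (st x * y)"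

lemma A_add_r: "A x (y + z) = A x y + A x z" unfolding A_def distrib_left by (rule phi_add)
lemma A_add_l: "A (x + y) z = A x z + A y z" unfolding A_def st_add distrib_right by (rule phi_add)
lemma A_diff_r: "A x (y - z) = A x y - A x z" unfolding A_def right_diff_distrib by (rule phi_diff)
lemma A_diff_l: "A (x - y) z = A x z - A y z" unfolding A_def st_diff left_diff_distrib by (rule phi_diff)
lemma A_s_r: "A x (sm c 1 * y) = c * A x y" unfolding A_def sm_assoc_left by (rule phi_s)
lemma A_s_l: "A (sm c 1 * x) y = cnj c * A x y"
  unfolding A_def st_mult st_s mult.assoc sm_assoc_left by (rule phi_s)

lemma herm: "A y x = cnj (A x y)"
proof -
  have 1: "Im (A (x+y) (x+y)) = 0" "Im (A x x) = 0" "Im (A y y) = 0"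
    using phi_pos_Im by (auto simp: A_def)
  then have i1: "Im (A x y + A y x) = 0" by (simp add: A_add_l A_add_r)
  have "Im (A (x + sm \<i> 1 * y) (x + sm \<i> 1 * y)) = 0" "Im (A (sm \<i> 1 * y) (sm \<i> 1 * y)) = 0"
    using phi_pos_Im by (auto simp: A_def)
  then have i2: "Im (\<i> * A x y - \<i> * A y x) = 0"
    using 1 by (simp add: A_add_l A_add_r A_s_l A_s_r)
  show ?thesis using i1 i2 by (intro complex_eqI) auto
qed

lemma quad_aux:
  fixes a b w :: real
  assumes a: "a \<ge> 0" and b: "b \<ge> 0" and q: "\<And>t. 0 \<le> a - 2 * t * w + t^2 * w * b" and w: "w \<ge> 0"
  shows "w \<le> a * b"
proof (cases "b = 0")
  case True
  show ?thesis
  proof (rule ccontr)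
    assume "\<not> ?thesis"
    then have wp: "w > 0" using True by simp
    have "2 * ((a+1)/(2*w)) * w = a + 1" using wp by simp
    with q[of "(a+1)/(2*w)"] True show False by simp
  qed
next
  case False
  then have bp: "b > 0" using b by simp
  have "(1/b)^2 * w * b = w / b" using bp by (simp add: power2_eq_square)
  moreover have "2 * (1/b) * w = 2 * (w / b)" by simp
  ultimately have "0 \<le> a - w / b" using q[of "1/b"] by linarith
  then have "w / b \<le> a" by simp
  then show ?thesis using bp by (simp add: divide_le_eq mult.commute)
qed

lemma CS: "(cmod (A y x))^2 \<le> Re (A x x) * Re (A y y)"
proof -
  define w where "w = A y x"
  have Axy: "A x y = cnj w" unfolding w_def by (rule herm)
  have ax: "Im (A x x) = 0" "Re (A x x) \<ge> 0" "Im (A y y) = 0" "Re (A y y) \<ge> 0"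
    using phi_pos_Im phi_pos_Re by (auto simp: A_def)
  have n: "w * cnj w = complex_of_real ((cmod w)^2)" by (rule complex_norm_square[symmetric])
  have n': "cnj w * w = complex_of_real ((cmod w)^2)" using n by (simp add: mult.commute)
  have q: "0 \<le> Re (A x x) - 2 * t * (cmod w)^2 + t^2 * (cmod w)^2 * Re (A y y)" for t :: real
  proof -
    define u where "u = complex_of_real t * w"
    have cu: "cnj u = complex_of_real t * cnj w" by (simp add: u_def)
    have e1: "A (x - sm u 1 * y) (x - sm u 1 * y) = A x x - A (sm u 1 * y) x - (A x (sm u 1 * y) - A (sm u 1 * y) (sm u 1 * y))"
      by (simp only: A_diff_l A_diff_r)
    have e2: "A (sm u 1 * y) (sm u 1 * y) = u * (cnj u * A y y)" by (simp only: A_s_l A_s_r)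
    have f1: "u * A x y = complex_of_real (t * (cmod w)^2)"
      unfolding Axy u_def by (simp only: mult.assoc n of_real_mult)
    have f2: "cnj u * A y x = complex_of_real (t * (cmod w)^2)"
      unfolding cu w_def[symmetric] by (simp only: mult.assoc n' of_real_mult)
    have f3: "u * (cnj u * A y y) = complex_of_real (t^2 * (cmod w)^2) * A y y"
    proof -
      have "u * cnj u = complex_of_real (t^2 * (cmod w)^2)"
        unfolding cu u_def using n by (simp add: power2_eq_square algebra_simps)
      then show ?thesis by (simp add: mult.assoc[symmetric])
    qed
    have "A (x - sm u 1 * y) (x - sm u 1 * y) = A x x - complex_of_real (t * (cmod w)^2) - (complex_of_real (t * (cmod w)^2) - complex_of_real (t^2 * (cmod w)^2) * A y y)"
      unfolding e1 A_s_l A_s_r f1 f2 f3[symmetric] by simp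
    then have "Re (A (x - sm u 1 * y) (x - sm u 1 * y)) = Re (A x x) - t * (cmod w)^2 - (t * (cmod w)^2 - t^2 * (cmod w)^2 * Re (A y y))"
      by simp
    moreover have "Re (A (x - sm u 1 * y) (x - sm u 1 * y)) \<ge> 0" using phi_pos_Re by (simp add: A_def)
    ultimately show ?thesis by simp
  qed
  show ?thesis unfolding w_def[symmetric] by (rule quad_aux[OF ax(2) ax(4) q]) simp
qed

lemma CS_prod: "(cmod (\<phi> (a * b)))^2 \<le> Re (\<phi> (a * st a)) * Re (\<phi> (st b * b))"
proof -
  have "(cmod (\<phi> (a * b)))^2 \<le> Re (\<phi> (st b * b)) * Re (\<phi> (a * st a))"
    using CS[of "st a" b] unfolding A_def st_st .
  then show ?thesis by (simp only: mult.commute)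
qed

end


inductive_set TP :: "(real^'d \<Rightarrow> complex) set" where
  TP_g: "gchar n \<in> TP"
| TP_0: "(\<lambda>x. 0) \<in> TP"
| TP_add: "t \<in> TP \<Longrightarrow> s \<in> TP \<Longrightarrow> (\<lambda>x. t x + s x) \<in> TP"
| TP_smul: "t \<in> TP \<Longrightarrow> (\<lambda>x. c * t x) \<in> TP"

lemma gchar_add: "gchar n x * gchar m x = gchar (n + m) x"
proof -
  have s: "(\<Sum>j\<in>UNIV. x$j * real_of_int ((n+m)$j)) = (\<Sum>j\<in>UNIV. x$j * real_of_int (n$j)) + (\<Sum>j\<in>UNIV. x$j * real_of_int (m$j))"
    by (simp add: sum.distrib distrib_left)
  show ?thesis unfolding gchar_def s by (simp add: exp_add[symmetric] distrib_left)
qed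

lemma exp_2pi_int: "exp (complex_of_real (2 * pi) * \<i> * complex_of_int k) = 1"
proof -
  have "real_of_int k \<in> \<int>" by simp
  from exp_integer_2pi[OF this] show ?thesis by (simp add: mult_ac)
qed

lemma gchar_0: "gchar 0 x = 1" by (simp add: gchar_def)

lemma TP_mult_g: "t \<in> TP \<Longrightarrow> (\<lambda>x. t x * gchar m x) \<in> TP"
proof (induction rule: TP.induct)
  case (TP_g n) then show ?case by (simp add: gchar_add TP.TP_g)
next
  case TP_0 then show ?case by (simp add: TP.TP_0)
next
  case (TP_add t s) then show ?case by (simp add: distrib_right TP.TP_add)
next
  case (TP_smul t c) then show ?case using TP.TP_smul[of "\<lambda>x. t x * gchar m x" c] by (simp add: mult.assoc)
qed

lemma TP_mult: "s \<in> TP \<Longrightarrow> t \<in> TP \<Longrightarrow> (\<lambda>x. t x * s x) \<in> TP"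
proof (induction rule: TP.induct)
  case (TP_g n) then show ?case by (rule TP_mult_g)
next
  case TP_0 then show ?case by (simp add: TP.TP_0)
next
  case (TP_add s1 s2) then show ?case by (simp add: distrib_left TP.TP_add)
next
  case (TP_smul s c) then show ?case using TP.TP_smul[of "\<lambda>x. t x * s x" c] by (simp add: ac_simps)
qed

lemma TP_const: "(\<lambda>x. c) \<in> TP"
  using TP_smul[OF TP_g[of 0], of c] by (simp add: gchar_0)

lemma TP_sum: "finite S \<Longrightarrow> (\<And>i. i \<in> S \<Longrightarrow> f i \<in> TP) \<Longrightarrow> (\<lambda>x. \<Sum>i\<in>S. f i x) \<in> TP"
proof (induction S rule: finite_induct)
  case empty then show ?case by (simp add: TP_0)
next
  case (insert a S) then show ?case by (simp add: TP_add)
qed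

lemma TP_Csd: "t \<in> TP \<Longrightarrow> t \<in> Csd"
proof (induction rule: TP.induct)
  case (TP_g n)
  have c: "continuous_on UNIV (gchar n)" unfolding gchar_def by (intro continuous_intros)
  have p: "gchar n (x + (\<chi> j. real_of_int (m$j))) = gchar n x" for x m
  proof -
    have "(\<Sum>j\<in>UNIV. (x + (\<chi> j. real_of_int (m$j)))$j * real_of_int (n$j)) = (\<Sum>j\<in>UNIV. x$j * real_of_int (n$j)) + real_of_int (\<Sum>j\<in>UNIV. m$j * n$j)"
      by (simp add: sum.distrib distrib_right)
    then have "gchar n (x + (\<chi> j. real_of_int (m$j))) = gchar n x * exp (2 * pi * \<i> * of_int (\<Sum>j\<in>UNIV. m$j * n$j))"
      unfolding gchar_def by (simp add: exp_add[symmetric] distrib_left)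
    moreover have "exp (2 * pi * \<i> * of_int (\<Sum>j\<in>UNIV. m$j * n$j)) = 1"
      by (rule exp_2pi_int)
    ultimately show ?thesis by simp
  qed
  show ?case using c p by (simp add: Csd_def)
next
  case TP_0 then show ?case by (simp add: Csd_def)
next
  case (TP_add t s) then show ?case by (auto simp: Csd_def intro!: continuous_intros)
next
  case (TP_smul t c) then show ?case by (auto simp: Csd_def intro!: continuous_intros)
qed

definition torus :: "real^'d \<Rightarrow> complex^'d"
  where "torus x = (\<chi> j. exp (\<i> * complex_of_real (2 * pi * x$j)))"

lemma gchar_axis: "gchar (axis i c) x = exp (\<i> * complex_of_real (2 * pi * x$i * of_int c))"
proof -
  have "(\<Sum>j\<in>UNIV. x$j * real_of_int (axis i c $ j)) = x$i * of_int c"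
    by (simp add: axis_def if_distrib cong: if_cong)
  then show ?thesis unfolding gchar_def by (simp add: mult_ac)
qed

lemma TP_cos: "(\<lambda>x. complex_of_real (cos (2 * pi * x$i))) \<in> TP"
proof -
  have "complex_of_real (cos (2 * pi * x$i)) = (1/2) * gchar (axis i 1) x + (1/2) * gchar (axis i (-1)) x" for x
    unfolding gchar_axis cos_of_real[symmetric] cos_exp_eq by (simp add: field_simps)
  then have "(\<lambda>x. complex_of_real (cos (2 * pi * x$i))) = (\<lambda>x. (1/2) * gchar (axis i 1) x + (1/2) * gchar (axis i (-1)) x)"
    by (rule ext)
  then show ?thesis by (simp only:) (rule TP_add[OF TP_smul[OF TP_g] TP_smul[OF TP_g]])
qed

lemma TP_sin: "(\<lambda>x. complex_of_real (sin (2 * pi * x$i))) \<in> TP"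
proof -
  have "complex_of_real (sin (2 * pi * x$i)) = (1/(2*\<i>)) * gchar (axis i 1) x + (-1/(2*\<i>)) * gchar (axis i (-1)) x" for x
    unfolding gchar_axis sin_of_real[symmetric] sin_exp_eq by (simp add: field_simps)
  then have "(\<lambda>x. complex_of_real (sin (2 * pi * x$i))) = (\<lambda>x. (1/(2*\<i>)) * gchar (axis i 1) x + (-1/(2*\<i>)) * gchar (axis i (-1)) x)"
    by (rule ext)
  then show ?thesis by (simp only:) (rule TP_add[OF TP_smul[OF TP_g] TP_smul[OF TP_g]])
qed

lemma TP_basis:
  assumes "b \<in> (Basis :: (complex^'d) set)"
  shows "(\<lambda>x. complex_of_real (torus x \<bullet> b)) \<in> TP"
proof -
  obtain i u where b: "b = axis i u" and u: "u \<in> (Basis :: complex set)"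
    using assms unfolding Basis_vec_def by auto
  have "u = 1 \<or> u = \<i>" using u by (simp add: Basis_complex_def)
  then show ?thesis
  proof
    assume "u = 1"
    then have "torus x \<bullet> b = cos (2 * pi * x$i)" for x
      by (simp add: b inner_axis torus_def Re_exp)
    then show ?thesis using TP_cos by simp
  next
    assume "u = \<i>"
    then have "torus x \<bullet> b = sin (2 * pi * x$i)" for x
      by (simp add: b inner_axis torus_def Im_exp)
    then show ?thesis using TP_sin by simp
  qed
qed

lemma rpf_TP:
  fixes p :: "complex^'d \<Rightarrow> real"
  assumes "real_polynomial_function p"
  shows "(\<lambda>x. complex_of_real (p (torus x))) \<in> TP"
  using assms
proof (induction rule: real_polynomial_function.induct)
  case (linear f)
  then have lf: "linear f" by (rule bounded_linear.linear)
  have fz: "f z = (\<Sum>b\<in>Basis. (z \<bullet> b) * f b)" for z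
  proof -
    have "f z = f (\<Sum>b\<in>Basis. (z \<bullet> b) *\<^sub>R b)" by (simp add: euclidean_representation)
    also have "\<dots> = (\<Sum>b\<in>Basis. (z \<bullet> b) * f b)"
      by (simp add: linear_sum[OF lf] linear_scale[OF lf])
    finally show ?thesis .
  qed
  have e: "complex_of_real (f (torus x)) = (\<Sum>b\<in>Basis. complex_of_real (f b) * complex_of_real (torus x \<bullet> b))" for x
    unfolding fz[of "torus x"] of_real_sum of_real_mult by (simp only: mult.commute)
  show ?case unfolding e
    by (intro TP_sum TP_smul TP_basis) auto
next
  case (const c) then show ?case by (rule TP_const)
next
  case (add f g) then show ?case by (simp add: TP_add)
next
  case (mult f g) then show ?case by (simp add: TP_mult)
qed

lemma pf_TP:
  fixes g :: "complex^'d \<Rightarrow> complex"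
  assumes "polynomial_function g"
  shows "(\<lambda>x. g (torus x)) \<in> TP"
proof -
  have "real_polynomial_function (Re \<circ> g)" "real_polynomial_function (Im \<circ> g)"
    using assms bounded_linear_Re bounded_linear_Im unfolding polynomial_function_def by blast+
  then have 1: "(\<lambda>x. complex_of_real (Re (g (torus x)))) \<in> TP" "(\<lambda>x. complex_of_real (Im (g (torus x)))) \<in> TP"
    using rpf_TP by (auto simp: o_def)
  have "g (torus x) = complex_of_real (Re (g (torus x))) + \<i> * complex_of_real (Im (g (torus x)))" for x
    by (simp add: complex_eq)
  then have "(\<lambda>x. g (torus x)) = (\<lambda>x. complex_of_real (Re (g (torus x))) + \<i> * complex_of_real (Im (g (torus x))))"
    by (rule ext)
  then show ?thesis by (simp only:) (rule TP_add[OF 1(1) TP_smul[OF 1(2)]])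
qed


lemma torus_cont: "continuous_on S torus"
  unfolding torus_def by (intro continuous_intros)

lemma torus_eq_exp: "exp (\<i> * complex_of_real (2 * pi * a)) = exp (\<i> * complex_of_real (2 * pi * b)) \<longleftrightarrow> (\<exists>n::int. a = b + of_int n)"
proof
  assume "exp (\<i> * complex_of_real (2 * pi * a)) = exp (\<i> * complex_of_real (2 * pi * b))"
  then obtain n :: int where "\<i> * complex_of_real (2 * pi * a) = \<i> * complex_of_real (2 * pi * b) + (of_int (2 * n) * pi) * \<i>"
    unfolding exp_eq by blast
  then have "Im (\<i> * complex_of_real (2 * pi * a)) = Im (\<i> * complex_of_real (2 * pi * b) + (of_int (2 * n) * pi) * \<i>)"
    by simp
  then have "2 * pi * a = 2 * pi * b + 2 * pi * of_int n" by (simp add: algebra_simps)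
  then have "(2 * pi) * a = (2 * pi) * (b + of_int n)" by (simp add: algebra_simps)
  then have "a = b + of_int n" by (simp only: mult_cancel_left) simp
  then show "\<exists>n::int. a = b + of_int n" by blast
next
  assume "\<exists>n::int. a = b + of_int n"
  then obtain n :: int where "a = b + of_int n" by blast
  then show "exp (\<i> * complex_of_real (2 * pi * a)) = exp (\<i> * complex_of_real (2 * pi * b))"
    unfolding exp_eq by (intro exI[of _ n]) (simp add: algebra_simps)
qed

lemma torus_eq_imp:
  assumes "torus x = torus y"
  shows "\<exists>n::int^'d. x = y + (\<chi> j. real_of_int (n$j))"
proof -
  have "\<forall>j. \<exists>n::int. x$j = y$j + of_int n"
  proof
    fix j
    have "torus x $ j = torus y $ j" using assms by simp
    then show "\<exists>n::int. x$j = y$j + of_int n" unfolding torus_def using torus_eq_exp by simp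
  qed
  then obtain N where N: "\<And>j. x$j = y$j + of_int (N j)" by metis
  show ?thesis by (rule exI[of _ "\<chi> j. N j"]) (simp add: vec_eq_iff N)
qed

lemma Csd_torus: "f \<in> Csd \<Longrightarrow> torus x = torus y \<Longrightarrow> f x = f y"
  using torus_eq_imp[of x y] by (auto simp: Csd_def)

lemma torus_frac: "torus x = torus (\<chi> j. frac (x$j))"
proof -
  have "torus x $ j = torus (\<chi> j. frac (x$j)) $ j" for j
  proof -
    have "x$j = frac (x$j) + of_int (floor (x$j))" by (simp add: frac_def)
    then show ?thesis unfolding torus_def using torus_eq_exp by auto
  qed
  then show ?thesis by (simp add: vec_eq_iff)
qed

lemma torus_image: "torus ` UNIV = torus ` cbox 0 1"
proof -
  have "(\<chi> j. frac (x$j)) \<in> cbox 0 1" for x :: "real^'d"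
    by (simp add: mem_box_cart frac_ge_0 less_imp_le[OF frac_lt_1])
  then show ?thesis using torus_frac by blast
qed

lemma Csd_F:
  fixes f :: "real^'d \<Rightarrow> complex"
  assumes f: "f \<in> Csd"
  defines "F \<equiv> (\<lambda>z. f (SOME x. torus x = z))"
  shows "\<And>x. F (torus x) = f x" and "continuous_on (torus ` UNIV) F" and "compact (torus ` (UNIV::(real^'d) set))"
proof -
  show Ft: "F (torus x) = f x" for x
  proof -
    have "torus (SOME y. torus y = torus x) = torus x" by (rule someI[of _ x]) simp
    then show ?thesis unfolding F_def using Csd_torus[OF f] by blast
  qed
  define K where "K = cbox (0::real^'d) 1"
  define T where "T = torus ` K"
  have T: "torus ` UNIV = T" unfolding T_def K_def by (rule torus_image)
  have cK: "compact K" unfolding K_def by simp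
  show "compact (torus ` (UNIV::(real^'d) set))" unfolding T T_def
    by (rule compact_continuous_image[OF torus_cont cK])
  have q: "quotient_map (top_of_set K) (top_of_set T) torus"
  proof (rule continuous_closed_imp_quotient_map)
    show cm: "continuous_map (top_of_set K) (top_of_set T) torus"
      by (auto simp: continuous_map_in_subtopology T_def torus_cont)
    show "closed_map (top_of_set K) (top_of_set T) torus"
    proof (rule continuous_imp_closed_map[OF cm])
      show "compact_space (top_of_set K)" using cK by (simp add: compact_space_subtopology compactin_euclidean_iff)
      show "Hausdorff_space (top_of_set T)" by (simp add: Hausdorff_space_subtopology)
    qed
    show "torus ` topspace (top_of_set K) = topspace (top_of_set T)" by (simp add: T_def)
  qed
  have "continuous_map (top_of_set K) euclidean (F \<circ> torus)"
  proof -
    have "F \<circ> torus = f" using Ft by (simp add: fun_eq_iff)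
    moreover have "continuous_on K f" using f continuous_on_subset by (auto simp: Csd_def)
    ultimately show ?thesis by simp
  qed
  from continuous_compose_quotient_map[OF q this]
  show "continuous_on (torus ` UNIV) F" unfolding T by simp
qed

lemma Csd_bounded:
  fixes f :: "real^'d \<Rightarrow> complex"
  assumes f: "f \<in> Csd"
  shows "\<exists>M. \<forall>x. cmod (f x) \<le> M"
proof -
  define F where "F = (\<lambda>z. f (SOME x. torus x = z))"
  note FF = Csd_F[OF f, folded F_def]
  have "compact (F ` torus ` UNIV)" by (rule compact_continuous_image[OF FF(2) FF(3)])
  then obtain M where "\<forall>y\<in>F ` torus ` UNIV. norm y \<le> M" using compact_imp_bounded bounded_iff by metis
  then have M: "cmod (F (torus x)) \<le> M" for x by blast
  have "cmod (f x) \<le> M" for x using M[of x] FF(1)[of x] by (simp add: F_def)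
  then show ?thesis by blast
qed

lemma TP_dense:
  fixes f :: "real^'d \<Rightarrow> complex"
  assumes f: "f \<in> Csd" and e: "e > 0"
  shows "\<exists>t\<in>TP. \<forall>x. cmod (f x - t x) \<le> e"
proof -
  define F where "F = (\<lambda>z. f (SOME x. torus x = z))"
  note FF = Csd_F[OF f, folded F_def]
  obtain g where g: "polynomial_function g" and ge: "\<forall>z\<in>torus ` UNIV. norm (F z - g z) < e"
    using Stone_Weierstrass_polynomial_function[OF FF(3) FF(2) e] by blast
  have ge': "cmod (F (torus x) - g (torus x)) < e" for x using ge by blast
  have "cmod (f x - g (torus x)) \<le> e" for x using ge'[of x] FF(1)[of x] by (simp add: F_def)
  then show ?thesis using pf_TP[OF g] by (intro bexI[where x="\<lambda>x. g (torus x)"]) auto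
qed


lemma Csd_add: "f \<in> Csd \<Longrightarrow> g \<in> Csd \<Longrightarrow> (\<lambda>x. f x + g x) \<in> Csd"
  by (auto simp: Csd_def intro!: continuous_intros)
lemma Csd_diff: "f \<in> Csd \<Longrightarrow> g \<in> Csd \<Longrightarrow> (\<lambda>x. f x - g x) \<in> Csd"
  by (auto simp: Csd_def intro!: continuous_intros)
lemma Csd_mult: "f \<in> Csd \<Longrightarrow> g \<in> Csd \<Longrightarrow> (\<lambda>x. f x * g x) \<in> Csd"
  by (auto simp: Csd_def intro!: continuous_intros)
lemma Csd_smul: "f \<in> Csd \<Longrightarrow> (\<lambda>x. c * f x) \<in> Csd"
  by (auto simp: Csd_def intro!: continuous_intros)
lemma Csd_cnj: "f \<in> Csd \<Longrightarrow> (\<lambda>x. cnj (f x)) \<in> Csd"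
  by (auto simp: Csd_def intro!: continuous_intros)
lemma Csd_const: "(\<lambda>x. c) \<in> Csd"
  by (auto simp: Csd_def)
lemma Csd_gchar: "gchar n \<in> Csd"
  by (rule TP_Csd[OF TP_g])
lemma Csd_shift: "f \<in> Csd \<Longrightarrow> (\<lambda>x. f (x + y)) \<in> Csd"
proof -
  assume f: "f \<in> Csd"
  then have c: "continuous_on UNIV f" and p: "\<And>x n. f (x + (\<chi> j. real_of_int (n$j))) = f x" by (auto simp: Csd_def)
  have "continuous_on UNIV (\<lambda>x. f (x + y))"
    by (rule continuous_on_compose2[OF c]) (auto intro!: continuous_intros)
  moreover have "f (x + (\<chi> j. real_of_int (n$j)) + y) = f (x + y)" for x n
    using p[of "x + y" n] by (simp add: ac_simps)
  ultimately show ?thesis by (simp add: Csd_def)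
qed
lemma Csd_sqrt:
  assumes h: "h \<in> Csd"
  shows "(\<lambda>x. complex_of_real (sqrt (M - (cmod (h x))^2))) \<in> Csd"
proof -
  have c: "continuous_on UNIV h" and p: "\<And>x n. h (x + (\<chi> j. real_of_int (n$j))) = h x" using h by (auto simp: Csd_def)
  have "continuous_on UNIV (\<lambda>x. complex_of_real (sqrt (M - (cmod (h x))^2)))"
    by (intro continuous_intros c)
  then show ?thesis using p by (simp add: Csd_def)
qed

lemma Csd_vanish:
  fixes D :: "(real^'d \<Rightarrow> complex) \<Rightarrow> complex"
  assumes Dadd: "\<And>f g. f \<in> Csd \<Longrightarrow> g \<in> Csd \<Longrightarrow> D (\<lambda>x. f x + g x) = D f + D g"
    and Dsmul: "\<And>f c. f \<in> Csd \<Longrightarrow> D (\<lambda>x. c * f x) = c * D f"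
    and Dg: "\<And>n. D (gchar n) = 0"
    and Dbound: "\<And>h M. h \<in> Csd \<Longrightarrow> (\<forall>x. cmod (h x) \<le> M) \<Longrightarrow> cmod (D h) \<le> C * M"
    and f: "f \<in> Csd"
  shows "D f = 0"
proof -
  have D0: "D (\<lambda>x. 0) = 0"
    using Dadd[OF Csd_const Csd_const, of 0 0] by simp
  have DTP: "t \<in> TP \<Longrightarrow> D t = 0" for t
  proof (induction rule: TP.induct)
    case (TP_g n) then show ?case by (rule Dg)
  next
    case TP_0 then show ?case by (rule D0)
  next
    case (TP_add t s) then show ?case using Dadd[OF TP_Csd TP_Csd] by simp
  next
    case (TP_smul t c) then show ?case using Dsmul[OF TP_Csd] by simp
  qed
  have le: "cmod (D f) \<le> C * e" if e: "e > 0" for e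
  proof -
    obtain t where t: "t \<in> TP" and te: "\<forall>x. cmod (f x - t x) \<le> e" using TP_dense[OF f e] by blast
    have tc: "t \<in> Csd" by (rule TP_Csd[OF t])
    have "D f = D (\<lambda>x. (f x - t x) + t x)" by simp
    also have "\<dots> = D (\<lambda>x. f x - t x) + D t" by (rule Dadd[OF Csd_diff[OF f tc] tc])
    also have "\<dots> = D (\<lambda>x. f x - t x)" using DTP[OF t] by simp
    finally have "D f = D (\<lambda>x. f x - t x)" .
    then show ?thesis using Dbound[OF Csd_diff[OF f tc] te] by simp
  qed
  show ?thesis
  proof (rule ccontr)
    assume "D f \<noteq> 0"
    then have d: "cmod (D f) > 0" by simp
    define e where "e = cmod (D f) / (2 * (\<bar>C\<bar> + 1))"
    have ep: "e > 0" unfolding e_def using d by (simp add: add_pos_nonneg)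
    have "C * e \<le> \<bar>C\<bar> * e" using ep by (simp add: mult_right_mono)
    also have "\<bar>C\<bar> * e < cmod (D f)"
    proof -
      have "\<bar>C\<bar> * e = cmod (D f) * (\<bar>C\<bar> / (2 * (\<bar>C\<bar> + 1)))" unfolding e_def by (simp add: field_simps)
      also have "\<dots> < cmod (D f) * 1"
        using d by (intro mult_strict_left_mono) (simp_all add: field_simps)
      finally show ?thesis by simp
    qed
    finally show False using le[OF ep] by simp
  qed
qed



locale biota = cstate sm st \<phi> for sm st \<phi> +
  fixes U :: "int^'d \<Rightarrow> 'a" and \<iota> :: "(real^'d \<Rightarrow> complex) \<Rightarrow> 'a"
  assumes iota: "is_iota sm st U \<iota>"
begin

lemma iota_add: "f \<in> Csd \<Longrightarrow> g \<in> Csd \<Longrightarrow> \<iota> (\<lambda>x. f x + g x) = \<iota> f + \<iota> g"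
  using iota by (simp add: is_iota_def)
lemma iota_mult: "f \<in> Csd \<Longrightarrow> g \<in> Csd \<Longrightarrow> \<iota> (\<lambda>x. f x * g x) = \<iota> f * \<iota> g"
  using iota by (simp add: is_iota_def)
lemma iota_smul: "f \<in> Csd \<Longrightarrow> \<iota> (\<lambda>x. c * f x) = sm c 1 * \<iota> f"
proof -
  assume "f \<in> Csd"
  then have "\<iota> (\<lambda>x. c * f x) = sm c (\<iota> f)" using iota by (simp add: is_iota_def)
  then show ?thesis by (simp only: sm_left[of c "\<iota> f"])
qed
lemma iota_cnj: "f \<in> Csd \<Longrightarrow> \<iota> (\<lambda>x. cnj (f x)) = st (\<iota> f)"
  using iota by (simp add: is_iota_def)
lemma iota_1: "\<iota> (\<lambda>x. 1) = 1"
  using iota by (simp add: is_iota_def)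
lemma iota_g: "\<iota> (gchar n) = U n"
  using iota by (simp add: is_iota_def)
lemma iota_const: "\<iota> (\<lambda>x. c) = sm c 1"
  using iota_smul[OF Csd_const, of c 1] iota_1 by simp

lemma iota_bound:
  assumes h: "h \<in> Csd" and M: "\<forall>x. cmod (h x) \<le> M"
  shows "Re (\<phi> (st (\<iota> h * B) * (\<iota> h * B))) \<le> M^2 * Re (\<phi> (st B * B))"
proof -
  define k where "k = (\<lambda>x. complex_of_real (sqrt (M^2 - (cmod (h x))^2)))"
  have kc: "k \<in> Csd" unfolding k_def by (rule Csd_sqrt[OF h])
  have pt: "cnj (h x) * h x + cnj (k x) * k x = complex_of_real (M^2)" for x
  proof -
    have "0 \<le> cmod (h x)" by simp
    then have "(cmod (h x))^2 \<le> M^2" using M by (simp add: power_mono)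
    then have s2: "sqrt (M^2 - (cmod (h x))^2) * sqrt (M^2 - (cmod (h x))^2) = M^2 - (cmod (h x))^2" by simp
    have "cnj (k x) * k x = complex_of_real (sqrt (M^2 - (cmod (h x))^2) * sqrt (M^2 - (cmod (h x))^2))"
      by (simp only: k_def complex_cnj_complex_of_real of_real_mult)
    then have "cnj (k x) * k x = complex_of_real (M^2 - (cmod (h x))^2)" by (simp only: s2)
    moreover have "cnj (h x) * h x = complex_of_real ((cmod (h x))^2)"
      using complex_norm_square[of "h x"] by (simp add: mult.commute)
    ultimately show ?thesis by simp
  qed
  have "sm (complex_of_real (M^2)) 1 = \<iota> (\<lambda>x. cnj (h x) * h x + cnj (k x) * k x)"
    unfolding pt iota_const ..
  also have "\<dots> = st (\<iota> h) * \<iota> h + st (\<iota> k) * \<iota> k"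
    using h kc by (simp add: iota_add iota_mult iota_cnj Csd_mult Csd_cnj)
  finally have e: "st (\<iota> h) * \<iota> h = sm (complex_of_real (M^2)) 1 - st (\<iota> k) * \<iota> k"
    by (simp add: algebra_simps)
  have "st (\<iota> h * B) * (\<iota> h * B) = st B * (st (\<iota> h) * \<iota> h) * B"
    by (simp add: st_mult mult.assoc)
  also have "\<dots> = sm (complex_of_real (M^2)) 1 * (st B * B) - st (\<iota> k * B) * (\<iota> k * B)"
    unfolding e by (simp add: st_mult algebra_simps sm_assoc_left)
  finally have "\<phi> (st (\<iota> h * B) * (\<iota> h * B)) = complex_of_real (M^2) * \<phi> (st B * B) - \<phi> (st (\<iota> k * B) * (\<iota> k * B))"
    by (simp add: phi_diff phi_s)
  then have "Re (\<phi> (st (\<iota> h * B) * (\<iota> h * B))) = M^2 * Re (\<phi> (st B * B)) - Re (\<phi> (st (\<iota> k * B) * (\<iota> k * B)))"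
    by simp
  moreover have "Re (\<phi> (st (\<iota> k * B) * (\<iota> k * B))) \<ge> 0" by (rule phi_pos_Re)
  ultimately show ?thesis by simp
qed

lemma main_bound:
  assumes h: "h \<in> Csd" and M: "\<forall>x. cmod (h x) \<le> M"
  shows "(cmod (\<phi> (X * \<iota> h * B)))^2 \<le> M^2 * (Re (\<phi> (X * st X)) * Re (\<phi> (st B * B)))"
proof -
  have "(cmod (\<phi> (X * (\<iota> h * B))))^2 \<le> Re (\<phi> (X * st X)) * Re (\<phi> (st (\<iota> h * B) * (\<iota> h * B)))"
    by (rule CS_prod)
  also have "\<dots> \<le> Re (\<phi> (X * st X)) * (M^2 * Re (\<phi> (st B * B)))"
  proof (rule mult_left_mono[OF iota_bound[OF h M]])
    show "0 \<le> Re (\<phi> (X * st X))" using phi_pos_Re[of "st X"] by simp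
  qed
  finally show ?thesis by (simp add: mult.assoc mult_ac)
qed

end


locale Bth = biota sm st \<phi> U \<iota> for sm st \<phi> U \<iota> +
  fixes \<theta> :: "real^'d^'k" and r :: "real^'k" and \<beta> :: real
    and \<alpha> :: "real \<Rightarrow> 'a \<Rightarrow> 'a" and V :: "nat^'k \<Rightarrow> 'a"
  assumes rel: "Btheta_relations sm st \<theta> U V"
    and dyn: "is_dynamics sm st \<alpha>"
    and dynV: "\<forall>t p. \<alpha> t (V p) = sm (exp (\<i> * complex_of_real (t * dotr p r))) (V p)"
    and kms: "is_KMS \<beta> \<alpha> \<phi>" and beta_pos: "\<beta> > 0"
begin

lemma kms_eig:
  assumes b: "\<And>t. \<alpha> t b = sm (exp (\<i> * complex_of_real (t * c))) 1 * b"
  shows "\<phi> (b * a) = exp (- complex_of_real (\<beta> * c)) * \<phi> (a * b)"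
proof -
  obtain F where contF: "continuous_on {z. 0 \<le> Im z \<and> Im z \<le> \<beta>} F"
    and holF: "F holomorphic_on {z. 0 < Im z \<and> Im z < \<beta>}"
    and F1: "\<And>t. F (complex_of_real t) = \<phi> (a * \<alpha> t b)"
    and F2: "\<And>t. F (complex_of_real t + \<i> * complex_of_real \<beta>) = \<phi> (\<alpha> t b * a)"
    using kms unfolding is_KMS_def by blast
  define G where "G z = F z - exp (\<i> * z * complex_of_real c) * \<phi> (a * b)" for z
  have "G (complex_of_real 0 + \<i> * complex_of_real \<beta>) = 0"
  proof (rule strip_zero[OF beta_pos])
    show "continuous_on {z. 0 \<le> Im z \<and> Im z \<le> \<beta>} G"
      unfolding G_def by (intro continuous_intros contF)
    show "G holomorphic_on {z. 0 < Im z \<and> Im z < \<beta>}"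
      unfolding G_def by (intro holomorphic_intros holF)
    show "G (complex_of_real t) = 0" for t
      unfolding G_def F1 b sm_assoc_left phi_s by (simp add: mult_ac)
  qed
  moreover have "F (complex_of_real 0 + \<i> * complex_of_real \<beta>) = \<phi> (b * a)"
    unfolding F2 b by simp
  ultimately show ?thesis unfolding G_def by (simp add: mult_ac)
qed


lemma V_add: "V (p + q) = V p * V q" using rel by (simp add: Btheta_relations_def)
lemma V_0: "V 0 = 1" using rel by (simp add: Btheta_relations_def)
lemma V_iso: "st (V p) * V p = 1" using rel by (simp add: Btheta_relations_def)
lemma Nica: "V p * st (V p) * (V q * st (V q)) = V (vmax p q) * st (V (vmax p q))"
  using rel by (simp add: Btheta_relations_def)
lemma U_add: "U (n + m) = U n * U m" using rel by (simp add: Btheta_relations_def)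
lemma U_0: "U 0 = 1" using rel by (simp add: Btheta_relations_def)
lemma U_unit: "st (U n) * U n = 1" "U n * st (U n) = 1" using rel by (simp_all add: Btheta_relations_def)
lemma UV: "U n * V p = sm (exp (2 * pi * \<i> * complex_of_real (bil p \<theta> n))) 1 * (V p * U n)"
proof -
  have "U n * V p = sm (exp (2 * pi * \<i> * complex_of_real (bil p \<theta> n))) (V p * U n)"
    using rel by (simp add: Btheta_relations_def)
  then show ?thesis by (simp only: sm_left[of _ "V p * U n"])
qed

lemma alpha_st: "\<alpha> t (st x) = st (\<alpha> t x)"
  using dyn by (simp add: is_dynamics_def star_automorphism_def)

lemma alpha_V: "\<alpha> t (V p) = sm (exp (\<i> * complex_of_real (t * dotr p r))) 1 * V p"
  using dynV sm_left[of _ "V p"] by simp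

lemma alpha_stV: "\<alpha> t (st (V p)) = sm (exp (\<i> * complex_of_real (t * (- dotr p r)))) 1 * st (V p)"
proof -
  have "\<alpha> t (st (V p)) = st (sm (exp (\<i> * complex_of_real (t * dotr p r))) 1 * V p)"
    by (simp only: alpha_st alpha_V)
  also have "\<dots> = st (V p) * sm (cnj (exp (\<i> * complex_of_real (t * dotr p r)))) 1"
    by (simp only: st_mult st_s)
  also have "\<dots> = sm (cnj (exp (\<i> * complex_of_real (t * dotr p r)))) 1 * st (V p)"
    by (simp only: central)
  also have "cnj (exp (\<i> * complex_of_real (t * dotr p r))) = exp (\<i> * complex_of_real (t * (- dotr p r)))"
    by (simp add: exp_cnj)
  finally show ?thesis .
qed

lemma phi_VstV: "\<phi> (V m * st (V m)) = exp (- complex_of_real (\<beta> * dotr m r))"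
  using kms_eig[OF alpha_V[of _ m], where a="st (V m)"] by (simp add: V_iso phi_1)

lemma phi_swap: "\<phi> (st (V q) * X) = exp (- complex_of_real (\<beta> * (- dotr q r))) * \<phi> (X * st (V q))"
  by (rule kms_eig[OF alpha_stV[of _ q]])

lemma phi_swap0: "st (V q) * X = 0 \<Longrightarrow> \<phi> (X * st (V q)) = 0"
  using phi_swap[of q X] by simp


lemma V_iso': "st (V p) * (V p * x) = x" by (simp add: mult.assoc[symmetric] V_iso)

lemma vmax_comm: "vmax p q = vmax q p" by (simp add: vmax_def vec_eq_iff max.commute)
lemma Pv_add: "p + (\<chi> i. vmax p q $ i - p$i) = vmax p q"
  by (simp add: vec_eq_iff vmax_def)

lemma Nica_swap: "st (V q) * V p = V (\<chi> i. vmax p q $ i - q$i) * st (V (\<chi> i. vmax p q $ i - p$i))"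
proof -
  define P where "P = (\<chi> i. vmax p q $ i - p$i)"
  define Q where "Q = (\<chi> i. vmax p q $ i - q$i)"
  have hp: "V (vmax p q) = V p * V P" unfolding P_def by (simp only: Pv_add V_add[symmetric])
  have hq: "V (vmax p q) = V q * V Q" unfolding Q_def using Pv_add[of q p] by (simp only: vmax_comm V_add[symmetric])
  have "st (V q) * V p = st (V q) * ((V q * st (V q)) * (V p * st (V p))) * V p"
    by (simp add: mult.assoc V_iso V_iso')
  also have "\<dots> = st (V q) * (V (vmax p q) * st (V (vmax p q))) * V p"
    using Nica[of q p] by (simp only: vmax_comm)
  also have "\<dots> = st (V q) * ((V q * V Q) * (st (V P) * st (V p))) * V p"
    using hp hq by (simp add: st_mult)
  also have "\<dots> = V Q * st (V P)"
    by (simp add: mult.assoc V_iso V_iso')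
  finally show ?thesis unfolding P_def Q_def .
qed

lemma stU: "st (U (- n)) = U n"
proof -
  have "st (U (- n)) = st (U (- n)) * (U (- n) * U n)" by (simp add: U_add[symmetric] U_0)
  also have "\<dots> = U n" by (simp add: mult.assoc[symmetric] U_unit)
  finally show ?thesis .
qed

lemma stV_U: "st (V P) * U n = sm (cnj (exp (2 * pi * \<i> * complex_of_real (bil P \<theta> (- n))))) 1 * (U n * st (V P))"
proof -
  define E where "E = exp (2 * pi * \<i> * complex_of_real (bil P \<theta> (- n)))"
  have "st (U (- n) * V P) = st (sm E 1 * (V P * U (- n)))" unfolding E_def by (simp only: UV)
  then have "st (V P) * U n = (U n * st (V P)) * sm (cnj E) 1"
    by (simp only: st_mult st_s stU mult.assoc)
  then show ?thesis unfolding E_def[symmetric] by (simp only: central)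
qed

lemma gchar_shift: "gchar n (x + thetaT \<theta> P) = exp (2 * pi * \<i> * complex_of_real (bil P \<theta> n)) * gchar n x"
proof -
  have b: "(\<Sum>j\<in>UNIV. thetaT \<theta> P $ j * real_of_int (n$j)) = bil P \<theta> n"
  proof -
    have "(\<Sum>j\<in>UNIV. thetaT \<theta> P $ j * real_of_int (n$j)) = (\<Sum>j\<in>UNIV. \<Sum>i\<in>UNIV. real (P$i) * (\<theta>$i$j) * real_of_int (n$j))"
      unfolding thetaT_def by (simp add: sum_distrib_right sum_distrib_left mult_ac)
    also have "\<dots> = (\<Sum>i\<in>UNIV. \<Sum>j\<in>UNIV. real (P$i) * (\<theta>$i$j) * real_of_int (n$j))"
      by (rule sum.swap)
    finally show ?thesis unfolding bil_def .
  qed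
  have sx: "(\<Sum>j\<in>UNIV. (x + thetaT \<theta> P) $ j * real_of_int (n$j)) = (\<Sum>j\<in>UNIV. x $ j * real_of_int (n$j)) + bil P \<theta> n"
    by (simp add: distrib_right sum.distrib b[symmetric])
  show ?thesis unfolding gchar_def sx of_real_add distrib_left exp_add by (simp add: mult_ac)
qed


lemma step_char:
  fixes p q :: "nat^'k"
  defines "P \<equiv> (\<chi> i. vmax p q $ i - p$i)"
  shows "\<phi> (V p * \<iota> (gchar n) * st (V q)) = \<phi> (V (p + P) * \<iota> (\<lambda>x. gchar n (x + thetaT \<theta> P)) * st (V (q + P)))"
proof -
  define E where "E = exp (2 * pi * \<i> * complex_of_real (bil P \<theta> n))"
  have i: "\<iota> (\<lambda>x. gchar n (x + thetaT \<theta> P)) = sm E 1 * U n"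
    unfolding gchar_shift E_def[symmetric] by (simp add: iota_smul[OF Csd_gchar] iota_g)
  have c: "V P * (sm E 1 * U n) = U n * V P"
    unfolding E_def by (simp add: UV sm_assoc_left)
  have "V (p + P) * \<iota> (\<lambda>x. gchar n (x + thetaT \<theta> P)) * st (V (q + P)) = V p * (V P * (sm E 1 * U n)) * (st (V P) * st (V q))"
    unfolding i V_add st_mult by (simp add: mult.assoc)
  also have "\<dots> = V p * U n * (V P * st (V P)) * st (V q)"
    unfolding c by (simp add: mult.assoc)
  finally have e2: "V (p + P) * \<iota> (\<lambda>x. gchar n (x + thetaT \<theta> P)) * st (V (q + P)) = V p * U n * (V P * st (V P)) * st (V q)" .
  define X where "X = V p * U n * (1 - V P * st (V P))"
  have "st (V q) * X = 0"
  proof -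
    define c where "c = cnj (exp (2 * pi * \<i> * complex_of_real (bil P \<theta> (- n))))"
    have "st (V q) * X = (st (V q) * V p) * U n * (1 - V P * st (V P))"
      unfolding X_def by (simp add: mult.assoc)
    also have "\<dots> = V (\<chi> i. vmax p q $ i - q$i) * (st (V P) * U n) * (1 - V P * st (V P))"
      unfolding Nica_swap P_def by (simp add: mult.assoc)
    also have "\<dots> = V (\<chi> i. vmax p q $ i - q$i) * (sm c 1 * U n) * (st (V P) * (1 - V P * st (V P)))"
      unfolding stV_U c_def[symmetric] by (simp add: mult.assoc)
    also have "st (V P) * (1 - V P * st (V P)) = 0"
      by (simp add: right_diff_distrib mult.assoc[symmetric] V_iso)
    finally show ?thesis by simp
  qed
  then have "\<phi> (X * st (V q)) = 0" by (rule phi_swap0)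
  then have "\<phi> (V p * U n * st (V q)) - \<phi> (V p * U n * (V P * st (V P)) * st (V q)) = 0"
    unfolding X_def by (simp add: right_diff_distrib left_diff_distrib phi_diff)
  then show ?thesis unfolding e2 iota_g by simp
qed


lemma sm_pull: "x * (sm c 1 * y) * z = sm c 1 * (x * y * z)"
  by (simp add: mult.assoc sm_assoc_left)

lemma phi_bound:
  assumes h: "h \<in> Csd" and M: "\<forall>x. cmod (h x) \<le> M"
  shows "cmod (\<phi> (V p * \<iota> h * st (V q))) \<le> M * sqrt (Re (\<phi> (V p * st (V p))) * Re (\<phi> (V q * st (V q))))"
proof -
  define A where "A = Re (\<phi> (V p * st (V p))) * Re (\<phi> (V q * st (V q)))"
  have A0: "A \<ge> 0" unfolding A_def using phi_pos_Re[of "st (V p)"] phi_pos_Re[of "st (V q)"] by simp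
  have M0: "M \<ge> 0" using M norm_ge_zero order_trans by blast
  have "(cmod (\<phi> (V p * \<iota> h * st (V q))))^2 \<le> M^2 * A"
    using main_bound[OF h M, of "V p" "st (V q)"] unfolding A_def by simp
  also have "\<dots> = (M * sqrt A)^2" using A0 by (simp add: power_mult_distrib)
  finally show ?thesis unfolding A_def[symmetric]
    by (rule power2_le_imp_le) (simp add: M0 A0)
qed

lemma step_gen:
  fixes p q :: "nat^'k"
  defines "P \<equiv> (\<chi> i. vmax p q $ i - p$i)"
  assumes f: "f \<in> Csd"
  shows "\<phi> (V p * \<iota> f * st (V q)) = \<phi> (V (p + P) * \<iota> (\<lambda>x. f (x + thetaT \<theta> P)) * st (V (q + P)))"
proof -
  define y where "y = thetaT \<theta> P"
  define D where "D h = \<phi> (V p * \<iota> h * st (V q)) - \<phi> (V (p + P) * \<iota> (\<lambda>x. h (x + y)) * st (V (q + P)))" for h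
  define C where "C = sqrt (Re (\<phi> (V p * st (V p))) * Re (\<phi> (V q * st (V q)))) + sqrt (Re (\<phi> (V (p+P) * st (V (p+P)))) * Re (\<phi> (V (q+P) * st (V (q+P)))))"
  have "D f = 0"
  proof (rule Csd_vanish[OF _ _ _ _ f])
    show "D (\<lambda>x. g x + h x) = D g + D h" if "g \<in> Csd" "h \<in> Csd" for g h
      unfolding D_def using iota_add[OF that] iota_add[OF Csd_shift[OF that(1)] Csd_shift[OF that(2)], of y]
      by (simp add: distrib_left distrib_right phi_add)
    show "D (\<lambda>x. c * g x) = c * D g" if "g \<in> Csd" for g c
      unfolding D_def using iota_smul[OF that, of c] iota_smul[OF Csd_shift[OF that], of c y]
      by (simp add: sm_pull phi_s right_diff_distrib)
    show "D (gchar n) = 0" for n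
      unfolding D_def y_def using step_char[where p=p and q=q and n=n] unfolding P_def by simp
    show "cmod (D h) \<le> C * M" if h: "h \<in> Csd" and M: "\<forall>x. cmod (h x) \<le> M" for h M
    proof -
      have M': "\<forall>x. cmod (h (x + y)) \<le> M" using M by simp
      have "cmod (D h) \<le> cmod (\<phi> (V p * \<iota> h * st (V q))) + cmod (\<phi> (V (p + P) * \<iota> (\<lambda>x. h (x + y)) * st (V (q + P))))"
        unfolding D_def by (rule norm_triangle_ineq4)
      also have "\<dots> \<le> M * sqrt (Re (\<phi> (V p * st (V p))) * Re (\<phi> (V q * st (V q)))) + M * sqrt (Re (\<phi> (V (p+P) * st (V (p+P)))) * Re (\<phi> (V (q+P) * st (V (q+P)))))"
        by (intro add_mono phi_bound h M M' Csd_shift)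
      finally show ?thesis unfolding C_def by (simp add: algebra_simps)
    qed
  qed
  then show ?thesis unfolding D_def y_def by simp
qed


lemma max_aux: "max (a + c) (b + c) - (a + c) = max a b - (a::nat)"
  by (cases "a \<le> b") (simp_all add: max_def)

lemma Pl_eq: "(\<chi> i. vmax (\<chi> i. p$i + l * (vmax p q $ i - p$i)) (\<chi> i. q$i + l * (vmax p q $ i - p$i)) $ i - (\<chi> i. p$i + l * (vmax p q $ i - p$i)) $ i) = (\<chi> i. vmax p q $ i - p$i)"
  by (simp add: vec_eq_iff vmax_def max_aux)

lemma iterate:
  assumes f: "f \<in> Csd"
  shows "\<phi> (V p * \<iota> f * st (V q)) =
            \<phi> (V (\<chi> i. p$i + l * (vmax p q $ i - p$i))
               * \<iota> (\<lambda>x. f (x + real l *\<^sub>R thetaT \<theta> (\<chi> i. vmax p q $ i - p$i)))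
               * st (V (\<chi> i. q$i + l * (vmax p q $ i - p$i))))"
proof (induction l)
  case 0
  have "(\<chi> i. p$i + 0 * (vmax p q $ i - p$i)) = p" "(\<chi> i. q$i + 0 * (vmax p q $ i - p$i)) = q"
    by (simp_all add: vec_eq_iff)
  then show ?case by simp
next
  case (Suc l)
  define P where "P = (\<chi> i. vmax p q $ i - p$i)"
  define pl where "pl = (\<chi> i. p$i + l * (vmax p q $ i - p$i))"
  define ql where "ql = (\<chi> i. q$i + l * (vmax p q $ i - p$i))"
  define fl where "fl = (\<lambda>x. f (x + real l *\<^sub>R thetaT \<theta> P))"
  have flc: "fl \<in> Csd" unfolding fl_def by (rule Csd_shift[OF f])
  have PP: "(\<chi> i. vmax pl ql $ i - pl $ i) = P" unfolding pl_def ql_def P_def by (rule Pl_eq)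
  have "\<phi> (V pl * \<iota> fl * st (V ql)) = \<phi> (V (pl + P) * \<iota> (\<lambda>x. fl (x + thetaT \<theta> P)) * st (V (ql + P)))"
    using step_gen[OF flc, where p=pl and q=ql] unfolding PP .
  moreover have "pl + P = (\<chi> i. p$i + Suc l * (vmax p q $ i - p$i))" "ql + P = (\<chi> i. q$i + Suc l * (vmax p q $ i - p$i))"
    unfolding pl_def ql_def P_def by (simp_all add: vec_eq_iff)
  moreover have "(\<lambda>x. fl (x + thetaT \<theta> P)) = (\<lambda>x. f (x + real (Suc l) *\<^sub>R thetaT \<theta> P))"
    unfolding fl_def by (simp add: algebra_simps)
  ultimately show ?case using Suc.IH unfolding pl_def ql_def fl_def P_def by simp
qed

lemma dotr_lin: "dotr (\<chi> i. p$i + l * P$i) r = dotr p r + real l * dotr P r"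
  unfolding dotr_def by (simp add: sum.distrib sum_distrib_left algebra_simps)

lemma P_pos:
  assumes r: "\<forall>i. r$i > 0" and pq: "dotr p r = dotr q r" and ne: "p \<noteq> q"
  shows "dotr (\<chi> i. vmax p q $ i - p$i) r > 0"
proof -
  have "\<exists>i. vmax p q $ i - p$i > 0"
  proof (rule ccontr)
    assume "\<not> ?thesis"
    then have nl: "\<not> p$i < max (p$i) (q$i)" for i by (auto simp: vmax_def)
    have le: "q$i \<le> p$i" for i using nl[of i] by (simp add: not_less max_def split: if_splits)
    have "(\<Sum>i\<in>UNIV. (real (p$i) - real (q$i)) * r$i) = dotr p r - dotr q r"
      unfolding dotr_def by (simp add: sum_subtractf left_diff_distrib)
    also have "\<dots> = 0" using pq by simp
    finally have s0: "(\<Sum>i\<in>UNIV. (real (p$i) - real (q$i)) * r$i) = 0" .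
    have nn: "\<And>i. i \<in> UNIV \<Longrightarrow> 0 \<le> (real (p$i) - real (q$i)) * r$i"
    proof -
      fix i
      have "0 \<le> real (p$i) - real (q$i)" using le[of i] by simp
      moreover have "0 \<le> r$i" using r less_imp_le by blast
      ultimately show "0 \<le> (real (p$i) - real (q$i)) * r$i" by simp
    qed
    have iff: "(\<Sum>i\<in>UNIV. (real (p$i) - real (q$i)) * r$i) = 0 \<longleftrightarrow> (\<forall>i\<in>UNIV. (real (p$i) - real (q$i)) * r$i = 0)"
      by (rule sum_nonneg_eq_0_iff[OF finite nn])
    have "\<forall>i\<in>UNIV. (real (p$i) - real (q$i)) * r$i = 0" using iffD1[OF iff s0] .
    then have z: "(real (p$i) - real (q$i)) * r$i = 0" for i by blast
    have "p$i = q$i" for i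
    proof -
      have "r$i \<noteq> 0" using r[rule_format, of i] by linarith
      then have "real (p$i) - real (q$i) = 0" using z[of i] by simp
      then show ?thesis by simp
    qed
    then show False using ne by (simp add: vec_eq_iff)
  qed
  then obtain i where i: "vmax p q $ i - p$i > 0" by blast
  have "0 < real (vmax p q $ i - p$i) * r$i" using i r by simp
  also have "\<dots> \<le> (\<Sum>j\<in>UNIV. real (vmax p q $ j - p$j) * r$j)"
  proof (rule member_le_sum)
    show "0 \<le> real (vmax p q $ j - p$j) * r$j" if "j \<in> UNIV - {i}" for j
      using r[rule_format, of j] by simp
  qed auto
  also have "\<dots> = dotr (\<chi> i. vmax p q $ i - p$i) r" by (simp add: dotr_def)
  finally show ?thesis .
qed


lemma Re_phi_VstV: "Re (\<phi> (V m * st (V m))) = exp (- (\<beta> * dotr m r))"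
proof -
  have "exp (- complex_of_real (\<beta> * dotr m r)) = complex_of_real (exp (- (\<beta> * dotr m r)))"
    by (simp only: of_real_exp of_real_minus)
  then show ?thesis by (simp only: phi_VstV Re_complex_of_real)
qed

lemma final:
  assumes r: "\<forall>i. r$i > 0" and pq: "dotr p r = dotr q r" and f: "f \<in> Csd"
  shows "(\<forall>l::nat. \<phi> (V p * \<iota> f * st (V q)) =
            \<phi> (V (\<chi> i. p$i + l * (vmax p q $ i - p$i))
               * \<iota> (\<lambda>x. f (x + real l *\<^sub>R thetaT \<theta> (\<chi> i. vmax p q $ i - p$i)))
               * st (V (\<chi> i. q$i + l * (vmax p q $ i - p$i)))))
         \<and> (p \<noteq> q \<longrightarrow> \<phi> (V p * \<iota> f * st (V q)) = 0)"
proof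
  show "\<forall>l::nat. \<phi> (V p * \<iota> f * st (V q)) =
            \<phi> (V (\<chi> i. p$i + l * (vmax p q $ i - p$i))
               * \<iota> (\<lambda>x. f (x + real l *\<^sub>R thetaT \<theta> (\<chi> i. vmax p q $ i - p$i)))
               * st (V (\<chi> i. q$i + l * (vmax p q $ i - p$i))))"
    by (intro allI iterate[OF f])
  show "p \<noteq> q \<longrightarrow> \<phi> (V p * \<iota> f * st (V q)) = 0"
  proof
    assume ne: "p \<noteq> q"
    define P where "P = (\<chi> i. vmax p q $ i - p$i)"
    define dP where "dP = dotr P r"
    have dP: "dP > 0" unfolding dP_def P_def by (rule P_pos[OF r pq ne])
    obtain M where M: "\<forall>x. cmod (f x) \<le> M" using Csd_bounded[OF f] by blast
    define x where "x = exp (- (\<beta> * dP))"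
    define K where "K = M * exp (- (\<beta> * dotr p r))"
    have x: "0 < x" "x < 1" unfolding x_def using dP beta_pos by auto
    have bnd: "cmod (\<phi> (V p * \<iota> f * st (V q))) \<le> K * x ^ l" for l :: nat
    proof -
      define pl where "pl = (\<chi> i. p$i + l * (vmax p q $ i - p$i))"
      define ql where "ql = (\<chi> i. q$i + l * (vmax p q $ i - p$i))"
      have dpl: "dotr pl r = dotr p r + real l * dP"
        using dotr_lin[of p l P] unfolding pl_def dP_def P_def by simp
      have dql: "dotr ql r = dotr p r + real l * dP"
        using dotr_lin[of q l P] pq unfolding ql_def dP_def P_def by simp
      have M': "\<forall>y. cmod (f (y + real l *\<^sub>R thetaT \<theta> P)) \<le> M" using M by simp
      have "cmod (\<phi> (V p * \<iota> f * st (V q))) = cmod (\<phi> (V pl * \<iota> (\<lambda>y. f (y + real l *\<^sub>R thetaT \<theta> P)) * st (V ql)))"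
        using iterate[OF f, where p=p and q=q and l=l] unfolding pl_def ql_def P_def by simp
      also have "\<dots> \<le> M * sqrt (Re (\<phi> (V pl * st (V pl))) * Re (\<phi> (V ql * st (V ql))))"
        by (rule phi_bound[OF Csd_shift[OF f] M'])
      also have "sqrt (Re (\<phi> (V pl * st (V pl))) * Re (\<phi> (V ql * st (V ql)))) = exp (- (\<beta> * (dotr p r + real l * dP)))"
        unfolding Re_phi_VstV dpl dql by (simp add: real_sqrt_mult_self)
      also have "exp (- (\<beta> * (dotr p r + real l * dP))) = exp (- (\<beta> * dotr p r)) * x ^ l"
        unfolding x_def by (simp add: exp_of_nat_mult[symmetric] exp_add[symmetric] algebra_simps)
      finally show ?thesis unfolding K_def by (simp add: mult.assoc)
    qed
    have lim: "(\<lambda>l. K * x ^ l) \<longlonglongrightarrow> 0"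
      using x by (intro tendsto_mult_right_zero LIMSEQ_power_zero) simp
    have "cmod (\<phi> (V p * \<iota> f * st (V q))) \<le> 0"
    proof (rule LIMSEQ_le_const[OF lim])
      show "\<exists>N. \<forall>n\<ge>N. cmod (\<phi> (V p * \<iota> f * st (V q))) \<le> K * x ^ n" using bnd by blast
    qed
    then show "\<phi> (V p * \<iota> f * st (V q)) = 0" by simp
  qed
qed

end

theorem mainTheorem6:
  fixes sm :: "complex \<Rightarrow> 'a::{real_normed_algebra_1,banach} \<Rightarrow> 'a"
    and st :: "'a \<Rightarrow> 'a"
    and \<theta> :: "real^'d^'k" and r :: "real^'k" and \<beta> :: real
    and U :: "int^'d \<Rightarrow> 'a" and V :: "nat^'k \<Rightarrow> 'a"
    and \<iota> :: "(real^'d \<Rightarrow> complex) \<Rightarrow> 'a"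
    and \<alpha> :: "real \<Rightarrow> 'a \<Rightarrow> 'a" and \<phi> :: "'a \<Rightarrow> complex"
    and p q :: "nat^'k" and f :: "real^'d \<Rightarrow> complex"
  assumes alg: "cstar_algebra sm st"
    and rel: "Btheta_relations sm st \<theta> U V"
    and iota: "is_iota sm st U \<iota>"
    and theta_nonneg: "\<forall>i j. \<theta>$i$j \<ge> 0"
    and r_pos: "\<forall>i. r$i > 0"
    and beta_pos: "\<beta> > 0"
    and dyn: "is_dynamics sm st \<alpha>"
    and dynU: "\<forall>t n. \<alpha> t (U n) = U n"
    and dynV: "\<forall>t p. \<alpha> t (V p) = sm (exp (\<i> * complex_of_real (t * dotr p r))) (V p)"
    and state: "is_state sm st \<phi>"
    and kms: "is_KMS \<beta> \<alpha> \<phi>"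
    and pq: "dotr p r = dotr q r"
    and f: "f \<in> Csd"
  shows "(\<forall>l::nat. \<phi> (V p * \<iota> f * st (V q)) =
            \<phi> (V (\<chi> i. p$i + l * (vmax p q $ i - p$i))
               * \<iota> (\<lambda>x. f (x + real l *\<^sub>R thetaT \<theta> (\<chi> i. vmax p q $ i - p$i)))
               * st (V (\<chi> i. q$i + l * (vmax p q $ i - p$i)))))
         \<and> (p \<noteq> q \<longrightarrow> \<phi> (V p * \<iota> f * st (V q)) = 0)"
proof -
  interpret B: Bth sm st \<phi> U \<iota> \<theta> r \<beta> \<alpha> V
    using alg state iota rel dyn dynV kms beta_pos
    by (simp add: Bth_def Bth_axioms_def biota_def biota_axioms_def cstate_def cstate_axioms_def cstar_def)
  show ?thesis by (rule B.final[OF r_pos pq f])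
qed

end
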